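(* Let $n$ and $x$ be positive integers with $x\le n$, let $k\ge 0$, and let $\mathcal M=\{M_1,\dots,M_s\}$ be a collection of perfect matchings of $K_{2n}$ such that each of the $\binom{2n}{2}$ edges of $K_{2n}$ belongs to at most $k$ of the matchings $M_1,\dots,M_s$. Let $$N=\sum_{j=\max(0,\,2x-n)}^{x}\binom{2x}{2j}\frac{(2j)!}{j!\,2^j}.$$ If $$k\le\frac{1}{e\cdot 2x(2n-1)\binom{n-1}{x-1}}\bigl(N-e\bigr),$$ then there exists a perfect matching $M$ of $K_{2n}$ such that $|M\cap M_i|\le x-1$ for every $i\in\{1,\dots,s\}$.
   Context: A perfect matching of $K_{2n}$ is a set of $n$ pairwise vertex-disjoint edges covering all $2n$ vertices; $e$ denotes Euler's number. The quantity $N$ counts the ways to choose a set of $j$ pairwise disjoint pairs from a fixed set of $2x$ vertices (leaving $2x-2j$ unpaired vertices), summed over those $j$ with $j+(2x-2j)\le n$. *)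

theory Defs
  imports "HOL-Analysis.Analysis"
begin

definition K_edges :: "nat \<Rightarrow> nat set set" where
  "K_edges n = {e. \<exists>u v. u < 2*n \<and> v < 2*n \<and> u \<noteq> v \<and> e = {u, v}}"

definition perfect_matching :: "nat \<Rightarrow> nat set set \<Rightarrow> bool" where
  "perfect_matching n M \<longleftrightarrow>
     M \<subseteq> K_edges n \<and>
     (\<forall>e\<in>M. \<forall>f\<in>M. e \<noteq> f \<longrightarrow> e \<inter> f = {}) \<and>
     \<Union>M = {0..<2*n}"

definition N_count :: "nat \<Rightarrow> nat \<Rightarrow> nat" where
  "N_count n x = (\<Sum>j = (2*x - n)..x. ((2*x) choose (2*j)) * (fact (2*j) div (fact j * 2^j)))"

end

theory Submission
  imports Defs
begin


definition df :: "nat \<Rightarrow> nat" where "df j = (\<Prod>i<j. 2*i+1)"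

lemma df_Suc: "df (Suc j) = df j * (2*j+1)" by (simp add: df_def)

lemma fact_double: "fact (2*j) = (fact j * 2^j * df j :: nat)"
proof (induction j)
  case 0 then show ?case by (simp add: df_def)
next
  case (Suc j)
  have "fact (2*Suc j) = (fact (2*j) * ((2*j+1) * (2*j+2)) :: nat)"
    by (simp add: algebra_simps)
  also have "\<dots> = fact j * 2^j * df j * ((2*j+1) * (2*j+2))" using Suc by simp
  also have "\<dots> = fact (Suc j) * 2^(Suc j) * df (Suc j)"
    by (simp add: df_Suc algebra_simps)
  finally show ?case .
qed

lemma df_div: "fact (2*j) div (fact j * 2^j) = df j"
  by (simp add: fact_double)

definition H :: "nat \<Rightarrow> nat \<Rightarrow> nat" where
  "H p v = (\<Sum>j\<le>p. if p < v + 2*j then (p choose (2*j)) * df j else 0)"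

lemma H_zero: "H p 0 = 0"
  unfolding H_def by (intro sum.neutral) auto

lemma H_0: "H 0 v = (if 0 < v then 1 else 0)"
  unfolding H_def by (simp add: df_def)

lemma H_rec: "H (Suc p) (Suc v) = H p v + p * H (p - 1) (Suc v)"
proof -
  define g where "g j = (if Suc p < Suc v + 2*j then (Suc p choose (2*j)) * df j else 0)" for j
  define A where "A j = (if p < v + 2*j then (p choose (2*j)) * df j else 0)" for j
  define B where "B i = (if p < v + 2*Suc i then (p choose Suc (2*i)) * df (Suc i) else 0)" for i
  have "H (Suc p) (Suc v) = g 0 + (\<Sum>i\<le>p. g (Suc i))"
    unfolding H_def g_def by (subst sum.atMost_Suc_shift) simp
  also have "\<dots> = A 0 + (\<Sum>i\<le>p. A (Suc i) + B i)"
  proof -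
    have "g (Suc i) = A (Suc i) + B i" for i
      unfolding g_def A_def B_def by (simp add: algebra_simps numeral_2_eq_2)
    moreover have "g 0 = A 0" unfolding g_def A_def by simp
    ultimately show ?thesis by simp
  qed
  also have "\<dots> = (\<Sum>j\<le>Suc p. A j) + (\<Sum>i\<le>p. B i)"
    by (subst sum.atMost_Suc_shift) (simp add: sum.distrib)
  also have "(\<Sum>j\<le>Suc p. A j) = H p v"
    unfolding H_def A_def by (simp add: binomial_eq_0)
  also have "(\<Sum>i\<le>p. B i) = p * H (p - 1) (Suc v)"
  proof (cases p)
    case 0 then show ?thesis by (simp add: B_def)
  next
    case (Suc q)
    have "B i = Suc q * (if q < Suc v + 2*i then (q choose (2*i)) * df i else 0)" for i
    proof -
      have ST: "(Suc q choose Suc (2*i)) * Suc (2*i) = Suc q * (q choose (2*i))"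
        by (metis Suc_times_binomial_eq)
      then have "(Suc q choose Suc (2*i)) * df (Suc i) = Suc q * ((q choose (2*i)) * df i)"
      proof -
        have "(Suc q choose Suc (2*i)) * df (Suc i) = ((Suc q choose Suc (2*i)) * Suc (2*i)) * df i"
          by (simp only: df_Suc mult.commute mult.left_commute mult.assoc) (simp add: ac_simps)
        also have "\<dots> = Suc q * ((q choose (2*i)) * df i)" by (metis ST mult.assoc)
        finally show ?thesis .
      qed
      moreover have "(Suc q < v + 2*Suc i) = (q < Suc v + 2*i)" by simp
      ultimately show ?thesis unfolding B_def Suc by simp
    qed
    then have "(\<Sum>i\<le>p. B i) = (\<Sum>i\<le>Suc q. Suc q * (if q < Suc v + 2*i then (q choose (2*i)) * df i else 0))"
      unfolding Suc by (intro sum.cong) auto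
    also have "\<dots> = Suc q * (\<Sum>i\<le>Suc q. (if q < Suc v + 2*i then (q choose (2*i)) * df i else 0))"
      by (simp only: sum_distrib_left)
    also have "\<dots> = Suc q * H q (Suc v)" unfolding H_def by (simp add: binomial_eq_0)
    finally show ?thesis using Suc by simp
  qed
  finally show ?thesis .
qed

lemma H_bound: "H (2*y) v \<le> (\<Prod>i<y. v + 2*i) \<and> H (2*y+1) v \<le> (\<Prod>i<y. v + 2*i + 1)"
proof (induction y arbitrary: v)
  case 0
  have "H 1 v \<le> 1"
  proof (cases v)
    case 0 then show ?thesis by (simp add: H_zero)
  next
    case (Suc w) then show ?thesis using H_rec[of 0 w] by (simp add: H_0)
  qed
  then show ?case by (simp add: H_0)
next
  case (Suc y)
  have E: "H (2*Suc y) v \<le> (\<Prod>i<Suc y. v + 2*i)" for v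
  proof (cases v)
    case 0 then show ?thesis by (simp add: H_zero)
  next
    case (Suc w)
    define P where "P = (\<Prod>i<y. Suc w + 2*i)"
    have r: "H (2*Suc y) (Suc w) = H (Suc (2*y)) w + Suc (2*y) * H (2*y) (Suc w)"
      using H_rec[of "Suc (2*y)" w] by simp
    have a: "H (Suc (2*y)) w \<le> w * P"
    proof (cases w)
      case 0 then show ?thesis by (simp add: H_zero)
    next
      case (Suc w')
      have "H (Suc (2*y)) w \<le> P" using Suc.IH[of w] by (simp add: P_def)
      also have "P \<le> w * P" using Suc by simp
      finally show ?thesis .
    qed
    have b: "H (2*y) (Suc w) \<le> P" using Suc.IH[of "Suc w"] by (simp add: P_def)
    have "H (2*Suc y) (Suc w) \<le> w * P + Suc (2*y) * P" using r a b
      by (metis add_mono mult_le_mono2)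
    also have "\<dots> = P * (Suc w + 2*y)" by (simp add: algebra_simps)
    also have "\<dots> = (\<Prod>i<Suc y. Suc w + 2*i)" by (simp add: P_def)
    finally show ?thesis using Suc by simp
  qed
  have O: "H (2*Suc y + 1) v \<le> (\<Prod>i<Suc y. v + 2*i + 1)"
  proof (cases v)
    case 0 then show ?thesis by (simp add: H_zero)
  next
    case (Suc w)
    define R where "R = (\<Prod>i<y. w + 2*i + 2)"
    have r: "H (2*Suc y + 1) (Suc w) = H (2*Suc y) w + Suc (Suc (2*y)) * H (2*y+1) (Suc w)"
      using H_rec[of "Suc (Suc (2*y))" w] by simp
    have a: "H (2*Suc y) w \<le> w * R"
    proof -
      have "(\<Prod>i<Suc y. w + 2*i) = w * (\<Prod>i<y. w + 2*Suc i)"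
        by (subst prod.lessThan_Suc_shift) simp
      also have "\<dots> = w * R" by (simp add: R_def algebra_simps)
      finally show ?thesis using E[of w] by simp
    qed
    have b: "H (2*y+1) (Suc w) \<le> R" using Suc.IH[of "Suc w"] by (simp add: R_def)
    have "H (2*Suc y + 1) (Suc w) \<le> w * R + Suc (Suc (2*y)) * R" using r a b
      by (metis add_mono mult_le_mono2)
    also have "\<dots> = R * (w + 2*y + 2)" by (simp add: algebra_simps)
    also have "\<dots> = (\<Prod>i<Suc y. Suc w + 2*i + 1)" by (simp add: R_def)
    finally show ?thesis using Suc by simp
  qed
  from E O show ?case by blast
qed

lemma N_eq_H:
  assumes "x \<le> n"
  shows "N_count n x = H (2*x) (2*(n-x)+1)"
proof -
  define g where "g j = (if 2*x < 2*(n-x)+1 + 2*j then ((2*x) choose (2*j)) * df j else 0)" for j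
  have "H (2*x) (2*(n-x)+1) = (\<Sum>j\<in>{..2*x}. g j)" unfolding H_def g_def by simp
  also have "\<dots> = (\<Sum>j\<in>{2*x-n..x}. g j)"
  proof (rule sum.mono_neutral_right)
    have "g j = 0" if j: "j \<in> {..2*x} - {2*x-n..x}" for j
    proof -
      from j have "j < 2*x - n \<or> x < j" by auto
      then show "g j = 0"
      proof
        assume "j < 2*x-n" then have "\<not> 2*x < 2*(n-x)+1 + 2*j" using assms by linarith
        then show ?thesis by (simp add: g_def)
      next
        assume "x < j" then show ?thesis by (simp add: g_def binomial_eq_0)
      qed
    qed
    then show "\<forall>j\<in>{..2*x} - {2*x-n..x}. g j = 0" by blast
  qed auto
  also have "\<dots> = N_count n x"
    unfolding N_count_def
  proof (rule sum.cong)
    fix j assume "j \<in> {2*x-n..x}"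
    then have "2*x < 2*(n-x)+1 + 2*j" using assms by auto
    then show "g j = ((2*x) choose (2*j)) * (fact (2*j) div (fact j * 2^j))"
      by (simp add: g_def df_div)
  qed simp
  finally show ?thesis by simp
qed

lemma N_bound:
  assumes "x \<le> n" "x = Suc x'"
  shows "N_count n x \<le> 2*x * (\<Prod>i<x'. 2*(n-x) + 2*i + 1)"
proof -
  define m where "m = n - x"
  define Q where "Q = (\<Prod>i<x'. 2*m + 2*i + 1)"
  have "N_count n x = H (Suc (Suc (2*x'))) (Suc (2*m))" using N_eq_H[OF assms(1)] assms(2)
    by (simp add: m_def)
  also have "\<dots> = H (2*x'+1) (2*m) + Suc (2*x') * H (2*x') (Suc (2*m))"
    using H_rec[of "Suc (2*x')" "2*m"] by simp
  also have "\<dots> \<le> Q + Suc (2*x') * Q"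
  proof (rule add_mono)
    show "H (2*x'+1) (2*m) \<le> Q" using H_bound[of x' "2*m"] by (simp add: Q_def)
    have "H (2*x') (Suc (2*m)) \<le> Q" using H_bound[of x' "Suc (2*m)"] by (simp add: Q_def)
    then show "Suc (2*x') * H (2*x') (Suc (2*m)) \<le> Suc (2*x') * Q" by (rule mult_le_mono2)
  qed
  also have "\<dots> = 2*x*Q" using assms(2) by simp
  finally show ?thesis by (simp add: Q_def m_def)
qed

lemma df_split: "df (m + x) = df m * (\<Prod>i<x. 2*m + 2*i + 1)"
  by (induction x) (simp_all add: df_Suc algebra_simps)



definition pmset :: "nat set \<Rightarrow> nat set set set" where
  "pmset V = {M. M \<subseteq> {e. e \<subseteq> V \<and> card e = 2} \<and> (\<forall>e\<in>M. \<forall>f\<in>M. e \<noteq> f \<longrightarrow> e \<inter> f = {}) \<and> \<Union>M = V}"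

lemma pmsetI:
  assumes "\<And>e. e \<in> M \<Longrightarrow> e \<subseteq> V \<and> card e = 2"
    "\<And>e f. e \<in> M \<Longrightarrow> f \<in> M \<Longrightarrow> e \<noteq> f \<Longrightarrow> e \<inter> f = {}"
    "\<Union>M = V"
  shows "M \<in> pmset V"
  using assms unfolding pmset_def by blast

lemma pmsetD:
  assumes "M \<in> pmset V"
  shows "\<And>e. e \<in> M \<Longrightarrow> e \<subseteq> V" "\<And>e. e \<in> M \<Longrightarrow> card e = 2"
    "\<And>e f. e \<in> M \<Longrightarrow> f \<in> M \<Longrightarrow> e \<noteq> f \<Longrightarrow> e \<inter> f = {}"
    "\<Union>M = V"
  using assms unfolding pmset_def by blast+

lemma pm_remove:
  assumes M: "M \<in> pmset V" and "S \<subseteq> M"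
  shows "M - S \<in> pmset (V - \<Union>S)"
proof (rule pmsetI)
  have dis: "f \<inter> \<Union>S = {}" if f: "f \<in> M - S" for f
  proof -
    have "f \<inter> g = {}" if "g \<in> S" for g
      using pmsetD(3)[OF M, of f g] f that assms(2) by blast
    then show ?thesis by blast
  qed
  show "e \<subseteq> V - \<Union>S \<and> card e = 2" if "e \<in> M - S" for e
    using dis[OF that] pmsetD(1,2)[OF M, of e] that by blast
  show "e \<inter> f = {}" if "e \<in> M - S" "f \<in> M - S" "e \<noteq> f" for e f
    using pmsetD(3)[OF M, of e f] that by blast
  show "\<Union>(M - S) = V - \<Union>S"
  proof
    show "\<Union>(M - S) \<subseteq> V - \<Union>S" using dis pmsetD(1)[OF M] by blast
    show "V - \<Union>S \<subseteq> \<Union>(M - S)" using pmsetD(4)[OF M] by blast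
  qed
qed

lemma pm_insert:
  assumes M: "M \<in> pmset (V - e)" and "e \<subseteq> V" "card e = 2"
  shows "insert e M \<in> pmset V"
proof (rule pmsetI)
  show "f \<subseteq> V \<and> card f = 2" if "f \<in> insert e M" for f
    using that assms pmsetD(1,2)[OF M, of f] by blast
  show "f \<inter> g = {}" if "f \<in> insert e M" "g \<in> insert e M" "f \<noteq> g" for f g
    using that pmsetD(1,3)[OF M] by blast
  show "\<Union>(insert e M) = V" using pmsetD(4)[OF M] assms(2) by blast
qed

lemma pm_finite: "finite V \<Longrightarrow> finite (pmset V)"
  by (rule finite_subset[of _ "Pow (Pow V)"]) (auto simp: pmset_def)

lemma pm_edge_notin: assumes "M \<in> pmset (V - e)" "e \<noteq> {}" shows "e \<notin> M"
  using pmsetD(1)[OF assms(1), of e] assms(2) by blast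

lemma pm_decomp:
  assumes "v \<in> V"
  shows "pmset V = (\<Union>w\<in>V-{v}. insert {v,w} ` pmset (V - {v,w}))"
proof
  show "pmset V \<subseteq> (\<Union>w\<in>V-{v}. insert {v,w} ` pmset (V - {v,w}))"
  proof
    fix M assume M: "M \<in> pmset V"
    then have "v \<in> \<Union>M" using assms pmsetD(4)[OF M] by simp
    then obtain e where e: "e \<in> M" "v \<in> e" by blast
    then have "e \<subseteq> V" "card e = 2" using pmsetD(1,2)[OF M] by auto
    then obtain a b where ab: "e = {a,b}" "a \<noteq> b" by (auto simp: card_2_iff)
    then obtain w where w: "e = {v,w}" "w \<noteq> v" using e(2) by auto
    have wV: "w \<in> V - {v}" using w \<open>e \<subseteq> V\<close> by auto
    have "M - {e} \<in> pmset (V - e)" using pm_remove[OF M, of "{e}"] e by simp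
    moreover have "M = insert e (M - {e})" using e by auto
    ultimately show "M \<in> (\<Union>w\<in>V-{v}. insert {v,w} ` pmset (V - {v,w}))"
      using wV w by blast
  qed
  show "(\<Union>w\<in>V-{v}. insert {v,w} ` pmset (V - {v,w})) \<subseteq> pmset V"
  proof
    fix M assume "M \<in> (\<Union>w\<in>V-{v}. insert {v,w} ` pmset (V - {v,w}))"
    then obtain w M' where w: "w \<in> V - {v}" "M' \<in> pmset (V - {v,w})" "M = insert {v,w} M'" by blast
    show "M \<in> pmset V" using pm_insert[OF w(2)] w assms by auto
  qed
qed

lemma pm_card: "finite V \<Longrightarrow> card V = 2*q \<Longrightarrow> card (pmset V) = df q"
proof (induction q arbitrary: V)
  case 0
  then have "V = {}" by simp
  have "pmset {} = {{}}"
  proof -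
    have "M = {}" if "M \<in> pmset {}" for M
    proof -
      have "e \<subseteq> {}" "card e = 2" if "e \<in> M" for e using pmsetD(1,2)[OF \<open>M \<in> pmset {}\<close>] that by auto
      then show ?thesis by fastforce
    qed
    moreover have "{} \<in> pmset {}" by (rule pmsetI) auto
    ultimately show ?thesis by blast
  qed
  then show ?case using \<open>V = {}\<close> by (simp add: df_def)
next
  case (Suc q)
  then obtain v where v: "v \<in> V" by fastforce
  have "card (pmset V) = card (\<Union>w\<in>V-{v}. insert {v,w} ` pmset (V - {v,w}))"
    using pm_decomp[OF v] by simp
  also have "\<dots> = (\<Sum>w\<in>V-{v}. card (insert {v,w} ` pmset (V - {v,w})))"
  proof (rule card_UN_disjoint)
    show "finite (V - {v})" using Suc by simp
    show "\<forall>w\<in>V - {v}. finite (insert {v, w} ` pmset (V - {v, w}))"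
      using Suc pm_finite by auto
    show "\<forall>w\<in>V - {v}. \<forall>w'\<in>V - {v}. w \<noteq> w' \<longrightarrow>
        insert {v, w} ` pmset (V - {v, w}) \<inter> insert {v, w'} ` pmset (V - {v, w'}) = {}"
    proof (intro ballI impI)
      fix w w' assume w: "w \<in> V - {v}" "w' \<in> V - {v}" "w \<noteq> w'"
      show "insert {v, w} ` pmset (V - {v, w}) \<inter> insert {v, w'} ` pmset (V - {v, w'}) = {}"
      proof (rule ccontr)
        assume "\<not> ?thesis"
        then obtain M where M1: "M \<in> insert {v, w} ` pmset (V - {v, w})"
          and M2: "M \<in> insert {v, w'} ` pmset (V - {v, w'})" by blast
        have "M \<in> pmset V" using M1 pm_decomp[OF v] w by blast
        moreover have "{v,w} \<in> M" using M1 by blast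
        moreover have "{v,w'} \<in> M" using M2 by blast
        moreover have "{v,w} \<noteq> {v,w'}" using w by (auto simp: doubleton_eq_iff)
        ultimately show False using pmsetD(3)[of M V "{v,w}" "{v,w'}"] by auto
      qed
    qed
  qed
  also have "\<dots> = (\<Sum>w\<in>V-{v}. df q)"
  proof (rule sum.cong)
    fix w assume w: "w \<in> V - {v}"
    have "inj_on (insert {v,w}) (pmset (V - {v,w}))"
    proof (rule inj_onI)
      fix A B assume "A \<in> pmset (V - {v,w})" "B \<in> pmset (V - {v,w})" "insert {v,w} A = insert {v,w} B"
      moreover have "{v,w} \<notin> A" "{v,w} \<notin> B" using pm_edge_notin calculation by auto
      ultimately show "A = B" by (metis insert_ident)
    qed
    moreover have "card (V - {v,w}) = 2*q" using Suc.prems v w by (simp add: card_Diff_subset)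
    ultimately show "card (insert {v,w} ` pmset (V - {v,w})) = df q"
      using Suc.IH[of "V - {v,w}"] Suc.prems by (simp add: card_image)
  qed simp
  also have "\<dots> = (2*q+1) * df q" using Suc.prems v by simp
  also have "\<dots> = df (Suc q)" by (simp add: df_Suc)
  finally show ?case .
qed

lemma pm_sub_card:
  assumes M: "M \<in> pmset V" and S: "S \<subseteq> M" and fin: "finite V"
  shows "card (\<Union>S) = 2 * card S"
proof -
  have "card (\<Union>S) = sum card S"
  proof (rule card_Union_disjoint)
    show "pairwise disjnt S"
      unfolding pairwise_def disjnt_def using pmsetD(3)[OF M] S by blast
    show "finite A" if "A \<in> S" for A
      using pmsetD(1)[OF M, of A] that S fin finite_subset by blast
  qed
  also have "\<dots> = sum (\<lambda>_. 2) S"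
    using pmsetD(2)[OF M] S by (intro sum.cong) auto
  finally show ?thesis by simp
qed

lemma pm_card_M:
  assumes M: "M \<in> pmset V" and fin: "finite V"
  shows "card V = 2 * card M"
  using pm_sub_card[OF M _ fin, of M] pmsetD(4)[OF M] by simp

lemma pm_contain:
  assumes M0: "M0 \<in> pmset V" and S: "S \<subseteq> M0" and fin: "finite V"
    and cV: "card V = 2*n" and cS: "card S = x"
  shows "card {M \<in> pmset V. S \<subseteq> M} \<le> df (n - x)"
proof -
  have "card {M \<in> pmset V. S \<subseteq> M} = card ((\<lambda>M. M - S) ` {M \<in> pmset V. S \<subseteq> M})"
    by (rule card_image[symmetric]) (auto intro!: inj_onI)
  also have "\<dots> \<le> card (pmset (V - \<Union>S))"
  proof (rule card_mono)
    show "finite (pmset (V - \<Union>S))" using fin pm_finite by simp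
    show "(\<lambda>M. M - S) ` {M \<in> pmset V. S \<subseteq> M} \<subseteq> pmset (V - \<Union>S)"
      using pm_remove by blast
  qed
  also have "\<dots> = df (n - x)"
  proof (rule pm_card)
    show "finite (V - \<Union>S)" using fin by simp
    have "\<Union>S \<subseteq> V" using pmsetD(4)[OF M0] S by blast
    then have "card (V - \<Union>S) = card V - card (\<Union>S)"
      using fin by (simp add: card_Diff_subset finite_subset)
    then show "card (V - \<Union>S) = 2 * (n - x)"
      using pm_sub_card[OF M0 S fin] cV cS by simp
  qed
  finally show ?thesis .
qed

lemma pm_bad:
  assumes M0: "M0 \<in> pmset V" and fin: "finite V" and cV: "card V = 2*n"
  shows "card {M \<in> pmset V. x \<le> card (M \<inter> M0)} \<le> (n choose x) * df (n - x)"
proof -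
  have finM0: "finite M0" using pmsetD(1)[OF M0] fin
    by (meson finite_Pow_iff finite_subset subsetI PowI)
  have cM0: "card M0 = n" using pm_card_M[OF M0 fin] cV by simp
  let ?I = "{S. S \<subseteq> M0 \<and> card S = x}"
  have sub: "{M \<in> pmset V. x \<le> card (M \<inter> M0)} \<subseteq> (\<Union>S\<in>?I. {M \<in> pmset V. S \<subseteq> M})"
  proof
    fix M assume M: "M \<in> {M \<in> pmset V. x \<le> card (M \<inter> M0)}"
    then obtain S where "S \<subseteq> M \<inter> M0" "card S = x"
      using obtain_subset_with_card_n by blast
    then show "M \<in> (\<Union>S\<in>?I. {M \<in> pmset V. S \<subseteq> M})" using M by blast
  qed
  have "card {M \<in> pmset V. x \<le> card (M \<inter> M0)} \<le> card (\<Union>S\<in>?I. {M \<in> pmset V. S \<subseteq> M})"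
  proof (rule card_mono)
    show "finite (\<Union>S\<in>?I. {M \<in> pmset V. S \<subseteq> M})"
      by (rule finite_subset[of _ "pmset V"]) (auto simp: pm_finite fin)
  qed (rule sub)
  also have "\<dots> \<le> (\<Sum>S\<in>?I. card {M \<in> pmset V. S \<subseteq> M})"
    using finM0 by (intro card_UN_le) auto
  also have "\<dots> \<le> (\<Sum>S\<in>?I. df (n - x))"
    using pm_contain[OF M0 _ fin cV] by (intro sum_mono) auto
  also have "\<dots> = (n choose x) * df (n - x)"
    using n_subsets[OF finM0, of x] cM0 by simp
  finally show ?thesis .
qed



lemma KE: "K_edges n = {e. e \<subseteq> {0..<2*n} \<and> card e = 2}"
  unfolding K_edges_def by (auto simp: card_2_iff) metis

lemma pm_iff: "perfect_matching n M \<longleftrightarrow> M \<in> pmset {0..<2*n}"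
  unfolding perfect_matching_def pmset_def KE by auto

lemma numeric:
  fixes n x k s x' :: nat and N Q :: real
  assumes x: "x = Suc x'" and xn: "x \<le> n"
    and F2: "real s \<le> real k * (2 * real n - 1)"
    and F3: "real k \<le> (N - exp 1) /
           (exp 1 * (2 * real x) * (2 * real n - 1) * real ((n - 1) choose (x - 1)))"
    and F4: "N \<le> 2 * real x * Q"
  shows "real s * real (n choose x) < (2 * real n - 1) * Q"
proof -
  obtain n1 where n1: "n = Suc n1" using x xn by (cases n) auto
  have F1: "real x * real (n choose x) = real n * real ((n - 1) choose (x - 1))"
  proof -
    have "n * ((n - 1) choose (x - 1)) = (n choose x) * x"
      unfolding n1 x diff_Suc_1 by (rule Suc_times_binomial_eq)
    then show ?thesis by (metis mult.commute of_nat_mult)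
  qed
  define c1 where "c1 = real ((n - 1) choose (x - 1))"
  have c1: "c1 \<ge> 1" using x xn n1 by (simp add: c1_def Suc_le_eq)
  have e2: "exp 1 \<ge> (2::real)" using exp_ge_add_one_self[of 1] by simp
  have nx: "real x \<ge> 1" "real n \<ge> 1" using x n1 by auto
  define D where "D = exp 1 * (2 * real x) * (2 * real n - 1) * c1"
  have Dpos: "D > 0" unfolding D_def using e2 c1 nx by (intro mult_pos_pos) auto
  have F3': "real k * D \<le> N - exp 1" using F3 Dpos by (simp add: D_def c1_def pos_le_divide_eq)
  define a where "a = real s * real (n choose x)"
  have "exp 1 * real x * a * (2 * real x) = 2 * exp 1 * real x * real s * (real x * real (n choose x))"
    by (simp add: a_def algebra_simps)
  also have "\<dots> = 2 * exp 1 * real x * c1 * real n * real s" by (simp add: F1 c1_def algebra_simps)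
  also have "\<dots> \<le> 2 * exp 1 * real x * c1 * real n * (real k * (2 * real n - 1))"
    using F2 e2 nx c1 by (intro mult_left_mono) auto
  also have "\<dots> = real n * (real k * D)" by (simp add: D_def algebra_simps)
  also have "\<dots> \<le> real n * (N - exp 1)" using F3' nx by (intro mult_left_mono) auto
  also have "\<dots> < real n * N" using nx by simp
  also have "\<dots> \<le> real n * (2 * real x * Q)" using F4 nx by (intro mult_left_mono) auto
  finally have "exp 1 * real x * a * (2 * real x) < real n * Q * (2 * real x)" by (simp add: algebra_simps)
  then have A: "exp 1 * real x * a < real n * Q" using nx by (simp add: ac_simps)
  have Qnn: "Q \<ge> 0"
  proof (rule ccontr)
    assume "\<not> Q \<ge> 0"
    then have "real n * Q < 0" using nx by (simp add: mult_pos_neg)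
    moreover have "a \<ge> 0" by (simp add: a_def)
    ultimately show False using A e2 nx by (smt (verit) mult_nonneg_nonneg)
  qed
  have "real n \<le> exp 1 * real x * (2 * real n - 1)"
  proof -
    have "real n \<le> 2 * (2 * real n - 1)" using nx by simp
    also have "\<dots> \<le> exp 1 * real x * (2 * real n - 1)"
      using e2 nx by (intro mult_right_mono) (auto intro: order_trans[of _ "exp 1 * 1"])
    finally show ?thesis .
  qed
  then have "real n * Q \<le> exp 1 * real x * ((2 * real n - 1) * Q)"
    using Qnn by (metis mult.assoc mult_right_mono)
  with A have "exp 1 * real x * a < exp 1 * real x * ((2 * real n - 1) * Q)" by linarith
  then show ?thesis unfolding a_def using e2 nx by (simp add: mult_less_cancel_left_pos)
qed

lemma card_as_sum:
  assumes "finite A" "B \<subseteq> A"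
  shows "card B = (\<Sum>e\<in>A. if e \<in> B then 1 else 0)"
proof -
  have "(\<Sum>e\<in>A \<inter> B. 1::nat) = (\<Sum>e\<in>A. if e \<in> B then 1 else 0)"
    by (rule sum.inter_restrict[OF assms(1)])
  then show ?thesis using assms by (simp add: Int_absorb1)
qed

theorem theorem3:
  fixes n x k :: nat and Ms :: "nat set set list"
  assumes "0 < x" and "x \<le> n"
    and "\<forall>i < length Ms. perfect_matching n (Ms ! i)"
    and "\<forall>e \<in> K_edges n. card {i. i < length Ms \<and> e \<in> Ms ! i} \<le> k"
    and "real k \<le> (real (N_count n x) - exp 1) /
           (exp 1 * (2 * real x) * (2 * real n - 1) * real ((n - 1) choose (x - 1)))"
  shows "\<exists>M. perfect_matching n M \<and> (\<forall>i < length Ms. card (M \<inter> Ms ! i) \<le> x - 1)"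
proof -
  define V where "V = {0..<2*n}"
  define s where "s = length Ms"
  define E where "E = K_edges n"
  define m where "m = n - x"
  obtain x' where x: "x = Suc x'" using assms(1) by (cases x) auto
  have n1: "n \<ge> 1" using assms by simp
  have finV: "finite V" and cV: "card V = 2*n" by (simp_all add: V_def)
  have Mi: "Ms ! i \<in> pmset V" if "i < s" for i
  proof -
    have "perfect_matching n (Ms ! i)" using assms(3) that unfolding s_def by blast
    then show ?thesis unfolding pm_iff V_def .
  qed
  have EV: "E = {e. e \<subseteq> V \<and> card e = 2}" unfolding E_def KE V_def ..
  have finE: "finite E"
  proof (rule finite_subset[of _ "Pow V"])
    show "E \<subseteq> Pow V" unfolding EV by blast
    show "finite (Pow V)" using finV by simp
  qed
  have cE: "card E = n * (2*n - 1)"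
  proof -
    have "card E = (2*n) choose 2" using n_subsets[OF finV, of 2] cV by (simp add: EV)
    also have "\<dots> = n * (2*n - 1)" by (simp add: choose_two)
    finally show ?thesis .
  qed
  have MiE: "Ms ! i \<subseteq> E" if "i < s" for i
    using pmsetD(1,2)[OF Mi[OF that]] by (auto simp: EV)
  have "s * n = (\<Sum>i<s. card (Ms ! i))"
  proof -
    have "card (Ms ! i) = n" if "i < s" for i using pm_card_M[OF Mi[OF that] finV] cV by simp
    then have "(\<Sum>i<s. card (Ms ! i)) = (\<Sum>i<s. n)" by (intro sum.cong) auto
    then show ?thesis by simp
  qed
  also have "\<dots> = (\<Sum>i<s. \<Sum>e\<in>E. if e \<in> Ms ! i then 1 else 0)"
    using card_as_sum[OF finE MiE] by simp
  also have "\<dots> = (\<Sum>e\<in>E. \<Sum>i<s. if e \<in> Ms ! i then 1 else 0)"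
    by (rule sum.swap)
  also have "\<dots> = (\<Sum>e\<in>E. card {i. i < s \<and> e \<in> Ms ! i})"
  proof (rule sum.cong)
    fix e assume "e \<in> E"
    have "card {i. i < s \<and> e \<in> Ms ! i} = (\<Sum>i\<in>{..<s}. if i \<in> {i. i < s \<and> e \<in> Ms ! i} then 1 else 0)"
      by (rule card_as_sum) auto
    then show "(\<Sum>i<s. if e \<in> Ms ! i then 1 else 0) = card {i. i < s \<and> e \<in> Ms ! i}"
      by simp
  qed simp
  also have "\<dots> \<le> (\<Sum>e\<in>E. k)"
    using assms(4) by (intro sum_mono) (simp add: E_def s_def)
  also have "\<dots> = k * (n * (2*n - 1))" using cE by simp
  finally have "s * n \<le> k * (2*n - 1) * n" by (simp add: ac_simps)
  then have sk: "s \<le> k * (2*n - 1)" using mult_le_cancel2[of s n "k*(2*n-1)"] n1 by linarith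
  have F2: "real s \<le> real k * (2 * real n - 1)"
  proof -
    have "real s \<le> real (k * (2*n - 1))" using sk by linarith
    also have "\<dots> = real k * (2 * real n - 1)" using n1 by (simp add: of_nat_diff)
    finally show ?thesis .
  qed
  define Qn where "Qn = (\<Prod>i<x'. 2*m + 2*i + 1)"
  have F4: "real (N_count n x) \<le> 2 * real x * real Qn"
  proof -
    have "N_count n x \<le> 2 * x * Qn" using N_bound[OF assms(2) x] by (simp add: Qn_def m_def)
    then have "real (N_count n x) \<le> real (2 * x * Qn)" by (simp only: of_nat_le_iff)
    then show ?thesis by simp
  qed
  have num: "real s * real (n choose x) < (2 * real n - 1) * real Qn"
    by (rule numeric[OF x assms(2) F2 assms(5) F4])
  have num': "s * (n choose x) < (2*n - 1) * Qn"
  proof -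
    have eq2: "real (2*n - 1) = 2 * real n - 1" using n1 by (simp add: of_nat_diff)
    have "real (s * (n choose x)) < real ((2*n - 1) * Qn)" unfolding of_nat_mult eq2 by (rule num)
    then show ?thesis by (simp only: of_nat_less_iff)
  qed
  have dfn: "df n = df m * ((2*n - 1) * Qn)"
  proof -
    have "df n = df (m + x)" using assms(2) by (simp add: m_def)
    also have "\<dots> = df m * (\<Prod>i<x. 2*m + 2*i + 1)" by (rule df_split)
    also have "(\<Prod>i<x. 2*m + 2*i + 1) = Qn * (2*m + 2*x' + 1)" by (simp add: x Qn_def)
    also have "2*m + 2*x' + 1 = 2*n - 1" using assms(2) x by (simp add: m_def)
    finally show ?thesis by (simp add: ac_simps)
  qed
  define B where "B = (\<Union>i<s. {M \<in> pmset V. x \<le> card (M \<inter> Ms ! i)})"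
  have "card B \<le> (\<Sum>i<s. card {M \<in> pmset V. x \<le> card (M \<inter> Ms ! i)})"
    unfolding B_def by (rule card_UN_le) simp
  also have "\<dots> \<le> (\<Sum>i<s. (n choose x) * df m)"
    using pm_bad[OF Mi finV cV] by (intro sum_mono) (simp add: m_def)
  also have "\<dots> = s * (n choose x) * df m" by simp
  also have "\<dots> < (2*n - 1) * Qn * df m"
  proof -
    have "df m > 0" by (simp add: df_def)
    then show ?thesis using num' by (rule mult_less_mono1[rotated])
  qed
  also have "\<dots> = card (pmset V)" using pm_card[OF finV cV] dfn by simp
  finally have "card B < card (pmset V)" .
  have "\<not> pmset V \<subseteq> B"
  proof
    assume "pmset V \<subseteq> B"
    moreover have "B \<subseteq> pmset V" by (auto simp: B_def)
    ultimately have "B = pmset V" by blast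
    then show False using \<open>card B < card (pmset V)\<close> by simp
  qed
  then obtain M where M: "M \<in> pmset V" "M \<notin> B" by blast
  have "card (M \<inter> Ms ! i) \<le> x - 1" if "i < length Ms" for i
  proof -
    have "\<not> x \<le> card (M \<inter> Ms ! i)" using M that by (auto simp: B_def s_def)
    then show ?thesis by linarith
  qed
  then show ?thesis using M pm_iff by (auto simp: V_def)
qed

end
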